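(* Let $\Gamma$ be a connected, infinite, locally-finite, 3-connected, quasi-transitive planar graph with exactly one end, and let $M$ be the map in $\mathcal{X}\in\{\mathbb{E}^2,\mathbb{H}^2\}$ obtained by embedding $\Gamma$ via Babai's theorem (so every automorphism of $\Gamma$ is induced by an isometry of $\mathcal{X}$). Then $V(M)$ is a locally finite collection of vertices, i.e. every compact subset of $\mathcal{X}$ contains only finitely many vertices of $M$.
   Context: A map $M$ in a surface $X$ is a graph embedded in $X$: vertices are distinct points, edges are curves joining their endpoints which meet only at common endpoints, and each component of $X$ minus the embedded graph (a face) is homeomorphic to an open disc. Babai's theorem (cited, not proved here): a locally-finite 3-connected quasi-transitive planar graph with at most one end has an embedding as such a map in a natural geometry $\mathcal{X}$ (the Euclidean plane $\mathbb{E}^2$ or hyperbolic plane $\mathbb{H}^2$) such that all automorphisms of $\Gamma$ are induced by isometries of $\mathcal{X}$. A graph is quasi-transitive if $\mathrm{Aut}(\Gamma)$ has finitely many vertex orbits; ends are equivalence classes of rays, two rays being equivalent if joined by infinitely many disjoint paths. *)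

theory Defs
  imports "HOL-Analysis.Analysis"
begin

definition graph :: "'v set \<Rightarrow> ('v \<Rightarrow> 'v \<Rightarrow> bool) \<Rightarrow> bool" where
  "graph V E \<longleftrightarrow> (\<forall>u v. E u v \<longrightarrow> u \<in> V \<and> v \<in> V \<and> u \<noteq> v \<and> E v u)"

definition connected_on :: "'v set \<Rightarrow> ('v \<Rightarrow> 'v \<Rightarrow> bool) \<Rightarrow> bool" where
  "connected_on W E \<longleftrightarrow>
     (\<forall>u\<in>W. \<forall>v\<in>W. (\<lambda>x y. E x y \<and> x \<in> W \<and> y \<in> W)\<^sup>*\<^sup>* u v)"

definition locally_finite_graph :: "'v set \<Rightarrow> ('v \<Rightarrow> 'v \<Rightarrow> bool) \<Rightarrow> bool" where
  "locally_finite_graph V E \<longleftrightarrow> (\<forall>u\<in>V. finite {v. E u v})"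

definition k_connected :: "nat \<Rightarrow> 'v set \<Rightarrow> ('v \<Rightarrow> 'v \<Rightarrow> bool) \<Rightarrow> bool" where
  "k_connected k V E \<longleftrightarrow>
     (\<not> (finite V \<and> card V \<le> k)) \<and>
     (\<forall>S. S \<subseteq> V \<and> finite S \<and> card S < k \<longrightarrow> connected_on (V - S) E)"

definition graph_automorphism :: "'v set \<Rightarrow> ('v \<Rightarrow> 'v \<Rightarrow> bool) \<Rightarrow> ('v \<Rightarrow> 'v) \<Rightarrow> bool" where
  "graph_automorphism V E \<sigma> \<longleftrightarrow>
     bij_betw \<sigma> V V \<and> (\<forall>u\<in>V. \<forall>v\<in>V. E u v \<longleftrightarrow> E (\<sigma> u) (\<sigma> v))"

definition quasi_transitive :: "'v set \<Rightarrow> ('v \<Rightarrow> 'v \<Rightarrow> bool) \<Rightarrow> bool" where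
  "quasi_transitive V E \<longleftrightarrow>
     finite ((\<lambda>v. {\<sigma> v | \<sigma>. graph_automorphism V E \<sigma>}) ` V)"

definition ray :: "'v set \<Rightarrow> ('v \<Rightarrow> 'v \<Rightarrow> bool) \<Rightarrow> (nat \<Rightarrow> 'v) \<Rightarrow> bool" where
  "ray V E r \<longleftrightarrow> inj r \<and> (\<forall>n. r n \<in> V \<and> E (r n) (r (Suc n)))"

definition gpath :: "'v set \<Rightarrow> ('v \<Rightarrow> 'v \<Rightarrow> bool) \<Rightarrow> 'v list \<Rightarrow> bool" where
  "gpath V E p \<longleftrightarrow> p \<noteq> [] \<and> distinct p \<and> set p \<subseteq> V \<and>
     (\<forall>i. Suc i < length p \<longrightarrow> E (p ! i) (p ! Suc i))"

definition equiv_rays :: "'v set \<Rightarrow> ('v \<Rightarrow> 'v \<Rightarrow> bool) \<Rightarrow> (nat \<Rightarrow> 'v) \<Rightarrow> (nat \<Rightarrow> 'v) \<Rightarrow> bool" where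
  "equiv_rays V E r1 r2 \<longleftrightarrow>
     (\<exists>P :: nat \<Rightarrow> 'v list.
        (\<forall>i. gpath V E (P i) \<and> hd (P i) \<in> range r1 \<and> last (P i) \<in> range r2) \<and>
        (\<forall>i j. i \<noteq> j \<longrightarrow> set (P i) \<inter> set (P j) = {}))"

definition one_ended :: "'v set \<Rightarrow> ('v \<Rightarrow> 'v \<Rightarrow> bool) \<Rightarrow> bool" where
  "one_ended V E \<longleftrightarrow> (\<exists>r. ray V E r) \<and>
     (\<forall>r1 r2. ray V E r1 \<and> ray V E r2 \<longrightarrow> equiv_rays V E r1 r2)"

section \<open>The natural geometries, modelled in the complex numbers\<close>

datatype geometry = Euclidean | Hyperbolic

text \<open>The Euclidean plane is the whole complex plane; the hyperbolic plane is the
Poincare disc model (open unit disc) with the hyperbolic distance.  In both cases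
the metric topology is the usual subspace topology of the complex plane.\<close>
fun carrier_geom :: "geometry \<Rightarrow> complex set" where
  "carrier_geom Euclidean = UNIV"
| "carrier_geom Hyperbolic = ball 0 1"

definition hdist :: "complex \<Rightarrow> complex \<Rightarrow> real" where
  "hdist z w = arcosh (1 + 2 * (cmod (z - w))\<^sup>2 / ((1 - (cmod z)\<^sup>2) * (1 - (cmod w)\<^sup>2)))"

fun dist_geom :: "geometry \<Rightarrow> complex \<Rightarrow> complex \<Rightarrow> real" where
  "dist_geom Euclidean z w = dist z w"
| "dist_geom Hyperbolic z w = hdist z w"

definition isometry_geom :: "geometry \<Rightarrow> (complex \<Rightarrow> complex) \<Rightarrow> bool" where
  "isometry_geom X f \<longleftrightarrow> bij_betw f (carrier_geom X) (carrier_geom X) \<and>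
     (\<forall>z\<in>carrier_geom X. \<forall>w\<in>carrier_geom X. dist_geom X (f z) (f w) = dist_geom X z w)"

text \<open>A map of the graph (V,E) in X: vertex positions pos (injective), and for each
ordered adjacent pair (u,v) an arc c u v from pos u to pos v, with c v u the reverse
of c u v.\<close>

definition edge_img :: "('v \<Rightarrow> 'v \<Rightarrow> real \<Rightarrow> complex) \<Rightarrow> 'v \<Rightarrow> 'v \<Rightarrow> complex set" where
  "edge_img c u v = path_image (c u v)"

definition graph_image ::
  "'v set \<Rightarrow> ('v \<Rightarrow> 'v \<Rightarrow> bool) \<Rightarrow> ('v \<Rightarrow> complex) \<Rightarrow> ('v \<Rightarrow> 'v \<Rightarrow> real \<Rightarrow> complex) \<Rightarrow> complex set" where
  "graph_image V E pos c = pos ` V \<union> (\<Union>{edge_img c u v | u v. E u v})"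

definition is_map ::
  "geometry \<Rightarrow> 'v set \<Rightarrow> ('v \<Rightarrow> 'v \<Rightarrow> bool) \<Rightarrow> ('v \<Rightarrow> complex) \<Rightarrow> ('v \<Rightarrow> 'v \<Rightarrow> real \<Rightarrow> complex) \<Rightarrow> bool" where
  "is_map X V E pos c \<longleftrightarrow>
     inj_on pos V \<and> pos ` V \<subseteq> carrier_geom X \<and>
     (\<forall>u v. E u v \<longrightarrow>
        arc (c u v) \<and> pathstart (c u v) = pos u \<and> pathfinish (c u v) = pos v \<and>
        c v u = reversepath (c u v) \<and>
        edge_img c u v \<subseteq> carrier_geom X \<and>
        edge_img c u v \<inter> pos ` V = {pos u, pos v}) \<and>
     (\<forall>u v x y. E u v \<and> E x y \<and> {u, v} \<noteq> {x, y} \<longrightarrow>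
        edge_img c u v \<inter> edge_img c x y \<subseteq> pos ` ({u, v} \<inter> {x, y})) \<and>
     (\<forall>F \<in> components (carrier_geom X - graph_image V E pos c).
        F homeomorphic ball (0::complex) 1)"

definition induced_by_isometry ::
  "geometry \<Rightarrow> 'v set \<Rightarrow> ('v \<Rightarrow> 'v \<Rightarrow> bool) \<Rightarrow> ('v \<Rightarrow> complex) \<Rightarrow> ('v \<Rightarrow> 'v \<Rightarrow> real \<Rightarrow> complex) \<Rightarrow> ('v \<Rightarrow> 'v) \<Rightarrow> bool" where
  "induced_by_isometry X V E pos c \<sigma> \<longleftrightarrow>
     (\<exists>f. isometry_geom X f \<and> (\<forall>v\<in>V. f (pos v) = pos (\<sigma> v)) \<and>
          (\<forall>u v. E u v \<longrightarrow> f ` edge_img c u v = edge_img c (\<sigma> u) (\<sigma> v)))"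

end

theory Submission
  imports Defs
begin

lemma aut_id: "graph_automorphism V E id"
  by (simp add: graph_automorphism_def bij_betw_id)

lemma aut_comp:
  assumes "graph_automorphism V E s" "graph_automorphism V E t"
  shows "graph_automorphism V E (s \<circ> t)"
proof -
  have b: "bij_betw (s \<circ> t) V V" using assms bij_betw_trans unfolding graph_automorphism_def by blast
  have "E u v \<longleftrightarrow> E ((s \<circ> t) u) ((s \<circ> t) v)" if "u \<in> V" "v \<in> V" for u v
  proof -
    have "t u \<in> V" "t v \<in> V" using assms that unfolding graph_automorphism_def bij_betw_def by auto
    then show ?thesis using assms that unfolding graph_automorphism_def by auto
  qed
  with b show ?thesis by (simp add: graph_automorphism_def)
qed

lemma aut_inv:
  assumes "graph_automorphism V E s"
  shows "graph_automorphism V E (inv_into V s)"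
proof -
  have b: "bij_betw s V V" using assms unfolding graph_automorphism_def by blast
  have b2: "bij_betw (inv_into V s) V V" using bij_betw_inv_into[OF b] .
  have "E u v \<longleftrightarrow> E (inv_into V s u) (inv_into V s v)" if "u \<in> V" "v \<in> V" for u v
  proof -
    have iu: "inv_into V s u \<in> V" "inv_into V s v \<in> V" using b2 that bij_betwE by blast+
    have "s (inv_into V s u) = u" "s (inv_into V s v) = v"
      using b that by (simp_all add: bij_betw_inv_into_right)
    then show ?thesis using assms iu unfolding graph_automorphism_def by metis
  qed
  with b2 show ?thesis by (simp add: graph_automorphism_def)
qed

lemma countable_V:
  assumes "connected_on V E" "locally_finite_graph V E"
  shows "countable V"
proof (cases "V = {}")
  case True then show ?thesis by simp
next
  case False
  then obtain v0 where v0: "v0 \<in> V" by blast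
  define R where "R = (\<lambda>x y. E x y \<and> x \<in> V \<and> y \<in> V)"
  have fin: "finite {y. (R ^^ n) v0 y}" for n
  proof (induction n)
    case 0 then show ?case by simp
  next
    case (Suc n)
    have "{y. (R ^^ Suc n) v0 y} \<subseteq> (\<Union>z\<in>{y. (R ^^ n) v0 y} \<inter> V. {y. E z y})"
      by (auto elim!: relpowp_Suc_E simp: R_def)
    moreover have "finite (\<Union>z\<in>{y. (R ^^ n) v0 y} \<inter> V. {y. E z y})"
      using Suc assms(2) unfolding locally_finite_graph_def by auto
    ultimately show ?case by (rule finite_subset)
  qed
  have "V \<subseteq> (\<Union>n. {y. (R ^^ n) v0 y})"
    using assms(1) v0 unfolding connected_on_def R_def by (auto simp: rtranclp_power)
  moreover have "countable (\<Union>n. {y. (R ^^ n) v0 y})"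
    using fin by (intro countable_UN) (auto intro: countable_finite)
  ultimately show ?thesis using countable_subset by blast
qed

lemma face_open:
  fixes F :: "complex set"
  assumes "F homeomorphic ball (0::complex) 1"
  shows "open F"
proof -
  obtain f g where h: "homeomorphism (ball (0::complex) 1) F f g"
    using assms homeomorphic_sym unfolding homeomorphic_def by blast
  have "open (f ` ball 0 1)"
    apply (rule invariance_of_domain[of "ball 0 1" f])
    using h unfolding homeomorphism_def by (auto intro: inj_on_inverseI)
  then show ?thesis using h unfolding homeomorphism_def by simp
qed

lemma carrier_open: "open (carrier_geom X)"
  by (cases X) auto

lemma hyp_ratio:
  fixes z w :: complex
  assumes "cmod z < 1" "cmod w < 1"
  shows "hdist z w = arcosh (1 + 2 * (cmod (z - w))\<^sup>2 / ((1 - (cmod z)\<^sup>2) * (1 - (cmod w)\<^sup>2)))"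
    and "(1 - (cmod z)\<^sup>2) * (1 - (cmod w)\<^sup>2) > 0"
    and "(1 - (cmod z)\<^sup>2) * (1 - (cmod w)\<^sup>2) \<le> 1"
proof -
  show "hdist z w = arcosh (1 + 2 * (cmod (z - w))\<^sup>2 / ((1 - (cmod z)\<^sup>2) * (1 - (cmod w)\<^sup>2)))"
    by (simp add: hdist_def)
  have a: "(cmod z)\<^sup>2 < 1" "(cmod w)\<^sup>2 < 1" using assms by (simp_all add: power_less_one_iff abs_square_less_1)
  then show "(1 - (cmod z)\<^sup>2) * (1 - (cmod w)\<^sup>2) > 0" by simp
  have "0 \<le> (cmod z)\<^sup>2" "0 \<le> (cmod w)\<^sup>2" by auto
  with a show "(1 - (cmod z)\<^sup>2) * (1 - (cmod w)\<^sup>2) \<le> 1"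
    by (simp add: mult_le_one)
qed

lemma L1:
  assumes "e > 0"
  shows "\<exists>d>0. \<forall>z\<in>carrier_geom X. \<forall>w\<in>carrier_geom X. dist_geom X z w < d \<longrightarrow> dist z w < e"
proof (cases X)
  case Euclidean
  then show ?thesis using assms by auto
next
  case Hyperbolic
  define d where "d = arcosh (1 + e\<^sup>2)"
  have "d > 0" unfolding d_def using assms by simp
  moreover have "dist z w < e" if "z \<in> ball 0 1" "w \<in> ball 0 1" "hdist z w < d" for z w
  proof -
    have zw: "cmod z < 1" "cmod w < 1" using that by auto
    define D where "D = (1 - (cmod z)\<^sup>2) * (1 - (cmod w)\<^sup>2)"
    define t where "t = 2 * (cmod (z - w))\<^sup>2 / D"
    have D: "D > 0" "D \<le> 1" using hyp_ratio[OF zw] unfolding D_def by auto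
    have t0: "t \<ge> 0" unfolding t_def using D by simp
    have "(cmod (z - w))\<^sup>2 \<le> 2 * (cmod (z - w))\<^sup>2 / D"
      using D by (simp add: le_divide_eq) (smt (verit) mult_left_le zero_le_power2)
    then have tge: "(cmod (z - w))\<^sup>2 \<le> t" unfolding t_def .
    have "arcosh (1 + t) < arcosh (1 + e\<^sup>2)"
      using that(3) hyp_ratio(1)[OF zw] unfolding t_def D_def d_def by simp
    then have "1 + t < 1 + e\<^sup>2" using t0 by (subst (asm) arcosh_less_iff_real) auto
    then have "(cmod (z - w))\<^sup>2 < e\<^sup>2" using tge by linarith
    then have "cmod (z - w) < e" using assms by (simp add: power_less_imp_less_base)
    then show ?thesis by (simp add: dist_norm)
  qed
  ultimately show ?thesis using Hyperbolic by auto
qed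

lemma L2:
  assumes "compact K" "K \<subseteq> carrier_geom X" "e > 0"
  shows "\<exists>d>0. \<forall>z\<in>K. \<forall>w\<in>K. dist z w < d \<longrightarrow> dist_geom X z w < e"
proof (cases X)
  case Euclidean
  then show ?thesis using assms by auto
next
  case Hyperbolic
  obtain R where R: "R < 1" "R \<ge> 0" "\<And>z. z \<in> K \<Longrightarrow> cmod z \<le> R"
  proof (cases "K = {}")
    case True then show ?thesis using that[of 0] by auto
  next
    case False
    obtain x where "x \<in> K" "\<And>y. y \<in> K \<Longrightarrow> cmod y \<le> cmod x"
      using compact_attains_sup[OF compact_continuous_image[OF continuous_on_norm_id assms(1)]] False
      by auto
    moreover have "cmod x < 1" using \<open>x \<in> K\<close> assms(2) Hyperbolic by auto
    ultimately show ?thesis using that[of "cmod x"] by auto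
  qed
  define m where "m = 1 - R\<^sup>2"
  have m: "m > 0" "m \<le> 1" unfolding m_def using R by (auto simp: power_less_one_iff abs_square_less_1)
  define C where "C = cosh e - 1"
  have C: "C > 0" unfolding C_def using assms(3) cosh_real_ge_1[of e] cosh_real_one_iff[of e] by linarith
  define d where "d = sqrt (C * m\<^sup>2 / 2)"
  have "d > 0" unfolding d_def using C m by simp
  moreover have "hdist z w < e" if "z \<in> K" "w \<in> K" "dist z w < d" for z w
  proof -
    have zR: "cmod z \<le> R" "cmod w \<le> R" using R that by auto
    have zw: "cmod z < 1" "cmod w < 1" using zR R by auto
    define D where "D = (1 - (cmod z)\<^sup>2) * (1 - (cmod w)\<^sup>2)"
    define t where "t = 2 * (cmod (z - w))\<^sup>2 / D"
    have D: "D > 0" using hyp_ratio[OF zw] unfolding D_def by auto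
    have "(cmod z)\<^sup>2 \<le> R\<^sup>2" "(cmod w)\<^sup>2 \<le> R\<^sup>2" using zR by (auto intro: power_mono)
    then have "1 - (cmod z)\<^sup>2 \<ge> m" "1 - (cmod w)\<^sup>2 \<ge> m" unfolding m_def by auto
    then have Dm: "D \<ge> m\<^sup>2" unfolding D_def power2_eq_square using m by (intro mult_mono) auto
    have t0: "t \<ge> 0" unfolding t_def using D by simp
    have "cmod (z - w) < d" using that(3) by (simp add: dist_norm)
    then have "(cmod (z - w))\<^sup>2 < d\<^sup>2" by (simp add: power_strict_mono)
    also have "d\<^sup>2 = C * m\<^sup>2 / 2" unfolding d_def using C m by simp
    finally have "2 * (cmod (z - w))\<^sup>2 < C * m\<^sup>2" by simp
    then have "2 * (cmod (z - w))\<^sup>2 < C * D" using Dm C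
      by (smt (verit) mult_left_mono)
    then have "t < C" unfolding t_def using D by (simp add: divide_less_eq)
    then have "1 + t < cosh e" unfolding C_def by simp
    then have "arcosh (1 + t) < arcosh (cosh e)" using t0
      by (subst arcosh_less_iff_real) auto
    also have "arcosh (cosh e) = e" using assms(3) by (simp add: arcosh_cosh_real)
    finally show ?thesis using hyp_ratio(1)[OF zw] unfolding t_def D_def by simp
  qed
  ultimately show ?thesis using Hyperbolic by auto
qed


theorem lemma2p3:
  fixes V :: "'v set" and E :: "'v \<Rightarrow> 'v \<Rightarrow> bool"
    and X :: geometry and pos :: "'v \<Rightarrow> complex" and c :: "'v \<Rightarrow> 'v \<Rightarrow> real \<Rightarrow> complex"
  assumes "graph V E"
    and "connected_on V E"
    and "infinite V"
    and "locally_finite_graph V E"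
    and "k_connected 3 V E"
    and "quasi_transitive V E"
    and "one_ended V E"
    and "is_map X V E pos c"
    and "\<forall>\<sigma>. graph_automorphism V E \<sigma> \<longrightarrow> induced_by_isometry X V E pos c \<sigma>"
  shows "\<forall>K. compact K \<and> K \<subseteq> carrier_geom X \<longrightarrow> finite {v \<in> V. pos v \<in> K}"
proof (intro allI impI)
  fix K assume K: "compact K \<and> K \<subseteq> carrier_geom X"
  note map = assms(8)[unfolded is_map_def]
  have faces: "\<forall>F \<in> components (carrier_geom X - graph_image V E pos c). F homeomorphic ball (0::complex) 1"
    using map by blast
  have injpos: "inj_on pos V" and posC: "pos ` V \<subseteq> carrier_geom X" using map by auto
  have ind: "\<exists>f. isometry_geom X f \<and> (\<forall>v\<in>V. f (pos v) = pos (s v)) \<and>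
          (\<forall>u v. E u v \<longrightarrow> f ` edge_img c u v = edge_img c (s u) (s v))"
    if "graph_automorphism V E s" for s
    using assms(9) that unfolding induced_by_isometry_def by blast
  have autV: "s v \<in> V" if "graph_automorphism V E s" "v \<in> V" for s v
    using that unfolding graph_automorphism_def bij_betw_def by auto
  show "finite {v \<in> V. pos v \<in> K}"
  proof (rule ccontr)
    assume inf: "infinite {v \<in> V. pos v \<in> K}"
    define S where "S = {v \<in> V. pos v \<in> K}"
    define Orb where "Orb b = {s b | s. graph_automorphism V E s}" for b
    have qt: "finite (Orb ` V)" using assms(6) unfolding quasi_transitive_def Orb_def .
    have "\<exists>b\<in>V. infinite (Orb b \<inter> S)"
    proof (rule ccontr)
      assume nt: "\<not> ?thesis"
      have "finite (\<Union>Y\<in>Orb ` V. Y \<inter> S)" by (rule finite_UN_I) (use qt nt in auto)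
      moreover have "S \<subseteq> (\<Union>Y\<in>Orb ` V. Y \<inter> S)"
      proof
        fix v assume "v \<in> S"
        then have "v \<in> Orb v" "v \<in> V" unfolding Orb_def S_def using aut_id[of V E] by (auto intro!: exI[of _ id])
        then show "v \<in> (\<Union>Y\<in>Orb ` V. Y \<inter> S)" using \<open>v \<in> S\<close> by auto
      qed
      ultimately show False using inf S_def finite_subset by metis
    qed
    then obtain b0 where b0: "b0 \<in> V" "infinite (Orb b0 \<inter> S)" by blast
    define Ob where "Ob = Orb b0"
    have ObV: "Ob \<subseteq> V" unfolding Ob_def Orb_def using autV b0 by auto
    have b0Ob: "b0 \<in> Ob" unfolding Ob_def Orb_def using aut_id[of V E] by (auto intro!: exI[of _ id])
    define Po where "Po = pos ` Ob"
    have OC: "Po \<subseteq> carrier_geom X" using ObV posC Po_def by auto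
    have pb0C: "pos b0 \<in> carrier_geom X" using posC b0 by auto
    have A: "pos b0 islimpt Po"
      unfolding islimpt_approachable
    proof (intro allI impI)
      fix e :: real assume e: "e > 0"
      obtain d1 where d1: "d1 > 0" "\<forall>z\<in>carrier_geom X. \<forall>w\<in>carrier_geom X. dist_geom X z w < d1 \<longrightarrow> dist z w < e"
        using L1[OF e] by blast
      obtain d where d: "d > 0" "\<forall>z\<in>K. \<forall>w\<in>K. dist z w < d \<longrightarrow> dist_geom X z w < d1"
        using L2[of K X d1] K d1 by blast
      define T where "T = pos ` (Ob \<inter> S)"
      have "infinite T" unfolding T_def using b0(2) Ob_def injpos ObV
        by (metis finite_imageD inj_on_subset inf_le1 order_trans)
      moreover have "T \<subseteq> K" unfolding T_def S_def by auto
      ultimately obtain q where q: "q \<in> K" "q islimpt T"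
        using K compact_eq_Bolzano_Weierstrass by metis
      have "infinite (T \<inter> ball q (d/2))" using q(2) d(1) unfolding islimpt_eq_infinite_ball by simp
      then obtain p1 where p1: "p1 \<in> T \<inter> ball q (d/2)" using infinite_imp_nonempty by blast
      have "infinite (T \<inter> ball q (d/2) - {p1})" using \<open>infinite (T \<inter> ball q (d/2))\<close> by simp
      then obtain p2 where p2: "p2 \<in> T \<inter> ball q (d/2) - {p1}" using infinite_imp_nonempty by blast
      have p: "p1 \<in> T \<inter> ball q (d/2)" "p2 \<in> T \<inter> ball q (d/2)" "p1 \<noteq> p2" using p1 p2 by auto
      have "dist p1 p2 < d" using p(1,2) dist_triangle_half_l[of p1 q d p2] by (auto simp: dist_commute)
      then have dg: "dist_geom X p1 p2 < d1" using d(2) p(1,2) \<open>T \<subseteq> K\<close> by auto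
      obtain x1 where x1: "x1 \<in> Ob" "p1 = pos x1" using p(1) T_def by auto
      obtain x2 where x2: "x2 \<in> Ob" "p2 = pos x2" using p(2) T_def by auto
      obtain s1 where s1: "graph_automorphism V E s1" "x1 = s1 b0" using x1 unfolding Ob_def Orb_def by auto
      obtain s2 where s2: "graph_automorphism V E s2" "x2 = s2 b0" using x2 unfolding Ob_def Orb_def by auto
      obtain f2 where f2: "isometry_geom X f2" "\<forall>v\<in>V. f2 (pos v) = pos (s2 v)" using ind[OF s2(1)] by blast
      define w where "w = inv_into V s2 x1"
      have bs2: "bij_betw s2 V V" using s2(1) unfolding graph_automorphism_def by auto
      have x1V: "x1 \<in> V" using x1 ObV by auto
      have wV: "w \<in> V" unfolding w_def using bs2 x1V by (metis bij_betw_def inv_into_into)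
      have s2w: "s2 w = x1" unfolding w_def using bs2 x1V by (simp add: bij_betw_inv_into_right)
      have wOb: "w \<in> Ob"
      proof -
        have "w = (inv_into V s2 \<circ> s1) b0" using s1 w_def by simp
        moreover have "graph_automorphism V E (inv_into V s2 \<circ> s1)" using aut_comp aut_inv s1 s2 by blast
        ultimately show ?thesis unfolding Ob_def Orb_def by blast
      qed
      have "w \<noteq> b0" using s2w s2(2) x1 x2 p(3) by auto
      then have ne: "pos w \<noteq> pos b0" using injpos wV b0(1) inj_on_eq_iff by metis
      have "dist_geom X (pos w) (pos b0) = dist_geom X (f2 (pos w)) (f2 (pos b0))"
      proof -
        have "pos w \<in> carrier_geom X" using posC wV by auto
        then show ?thesis using f2(1) pb0C unfolding isometry_geom_def by auto
      qed
      also have "\<dots> = dist_geom X p1 p2" using f2(2) wV b0(1) s2w s2(2) x1 x2 by auto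
      finally have "dist_geom X (pos w) (pos b0) < d1" using dg by simp
      moreover have "pos w \<in> carrier_geom X" using posC wV by auto
      ultimately have "dist (pos w) (pos b0) < e" using d1(2) pb0C by blast
      then show "\<exists>x'\<in>Po. x' \<noteq> pos b0 \<and> dist x' (pos b0) < e" using ne wOb Po_def by auto
    qed
    obtain r where r: "r > 0" "cball (pos b0) r \<subseteq> carrier_geom X"
      using carrier_open[of X] pb0C open_contains_cball by blast
    have B: "x islimpt Po" if xPo: "x \<in> Po" for x
      unfolding islimpt_approachable
    proof (intro allI impI)
      fix e :: real assume e: "e > 0"
      obtain x0 where x0: "x0 \<in> Ob" "x = pos x0" using xPo Po_def by auto
      obtain s where s: "graph_automorphism V E s" "x0 = s b0" using x0 unfolding Ob_def Orb_def by auto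
      obtain f where f: "isometry_geom X f" "\<forall>v\<in>V. f (pos v) = pos (s v)" using ind[OF s(1)] by blast
      obtain d1 where d1: "d1 > 0" "\<forall>z\<in>carrier_geom X. \<forall>w\<in>carrier_geom X. dist_geom X z w < d1 \<longrightarrow> dist z w < e"
        using L1[OF e] by blast
      obtain d where d: "d > 0" "\<forall>z\<in>cball (pos b0) r. \<forall>w\<in>cball (pos b0) r. dist z w < d \<longrightarrow> dist_geom X z w < d1"
        using L2[of "cball (pos b0) r" X d1] r d1 by auto
      obtain y where y: "y \<in> Po" "y \<noteq> pos b0" "dist y (pos b0) < min d r"
        using A r d unfolding islimpt_approachable by (metis min_less_iff_conj)
      obtain yv where yv: "yv \<in> Ob" "y = pos yv" using y Po_def by auto
      obtain t where t: "graph_automorphism V E t" "yv = t b0" using yv unfolding Ob_def Orb_def by auto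
      have yV: "yv \<in> V" using yv ObV by auto
      have "y \<in> cball (pos b0) r" "pos b0 \<in> cball (pos b0) r" using y r by (auto simp: dist_commute)
      then have "dist_geom X y (pos b0) < d1" using d y by auto
      moreover have "dist_geom X (f y) (f (pos b0)) = dist_geom X y (pos b0)"
      proof -
        have "y \<in> carrier_geom X" using posC yV yv by auto
        then show ?thesis using f(1) pb0C unfolding isometry_geom_def by auto
      qed
      moreover have fy: "f y = pos (s yv)" "f (pos b0) = x" using f(2) yV yv b0(1) x0 s by auto
      moreover have "s yv \<in> V" using autV s(1) yV by auto
      moreover have "x \<in> carrier_geom X" using OC xPo by auto
      ultimately have "dist_geom X (f y) x < d1" "f y \<in> carrier_geom X" using posC by auto
      then have "dist (f y) x < e" using d1(2) \<open>x \<in> carrier_geom X\<close> by blast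
      moreover have "f y \<in> Po"
      proof -
        have "s yv = (s \<circ> t) b0" using t by simp
        moreover have "graph_automorphism V E (s \<circ> t)" using aut_comp s t by blast
        ultimately show ?thesis using fy unfolding Po_def Ob_def Orb_def by blast
      qed
      moreover have "f y \<noteq> x"
      proof
        assume "f y = x"
        then have "f y = f (pos b0)" using fy by simp
        moreover have "inj_on f (carrier_geom X)" using f(1) unfolding isometry_geom_def bij_betw_def by auto
        ultimately show False using y(2) posC yV yv pb0C inj_on_eq_iff by (metis image_subset_iff)
      qed
      ultimately show "\<exists>x'\<in>Po. x' \<noteq> x \<and> dist x' x < e" by blast
    qed
    define Pb where "Pb = Po \<inter> ball (pos b0) r"
    define Q where "Q = closure Pb"
    have QC: "Q \<subseteq> carrier_geom X"
    proof -
      have "Q \<subseteq> closure (ball (pos b0) r)" unfolding Q_def Pb_def by (intro closure_mono) auto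
      then show ?thesis using r by auto
    qed
    have Qne: "pos b0 \<in> Q" unfolding Q_def Pb_def Po_def using b0Ob r closure_subset by fastforce
    define G where "G = graph_image V E pos c"
    have QG: "Q \<subseteq> G"
    proof
      fix q assume q: "q \<in> Q"
      show "q \<in> G"
      proof (rule ccontr)
        assume "q \<notin> G"
        then have qin: "q \<in> carrier_geom X - G" using q QC by auto
        define F where "F = connected_component_set (carrier_geom X - G) q"
        have "F \<in> components (carrier_geom X - G)" unfolding F_def using qin components_iff by blast
        then have "F homeomorphic ball (0::complex) 1" using faces unfolding G_def by blast
        then have "open F" by (rule face_open)
        moreover have "q \<in> F" unfolding F_def using qin by simp
        ultimately have "F \<inter> Pb \<noteq> {}" using q open_Int_closure_eq_empty[of F Pb] unfolding Q_def by blast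
        moreover have "Pb \<subseteq> G" unfolding Pb_def Po_def G_def graph_image_def using ObV by auto
        moreover have "F \<subseteq> carrier_geom X - G" unfolding F_def by (rule connected_component_subset)
        ultimately show False by blast
      qed
    qed
    have key: "infinite (W \<inter> Pb)" if "open W" "W \<inter> Q \<noteq> {}" for W
    proof -
      have "W \<inter> Pb \<noteq> {}" using that open_Int_closure_eq_empty[of W Pb] unfolding Q_def by blast
      then obtain pt where pt: "pt \<in> W" "pt \<in> Pb" by blast
      then have "pt islimpt Po" using B Pb_def by auto
      moreover have "open (W \<inter> ball (pos b0) r)" "pt \<in> W \<inter> ball (pos b0) r" using that pt Pb_def by auto
      then obtain e where e: "e > 0" "ball pt e \<subseteq> W \<inter> ball (pos b0) r" using open_contains_ball by blast
      ultimately have "infinite (Po \<inter> ball pt e)" using islimpt_eq_infinite_ball by blast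
      moreover have "Po \<inter> ball pt e \<subseteq> W \<inter> Pb" using e unfolding Pb_def by auto
      ultimately show ?thesis using finite_subset by blast
    qed
    define \<G> where "\<G> = (\<lambda>v. {pos v}) ` V \<union> (\<lambda>(u,v). edge_img c u v) ` {(u,v). E u v}"
    have cV: "countable V" using countable_V assms(2,4) by blast
    have cG: "countable \<G>"
    proof -
      have "{(u,v). E u v} \<subseteq> V \<times> V"
      proof (clarify)
        fix u v assume "E u v"
        then show "u \<in> V \<and> v \<in> V" using assms(1) unfolding graph_def by blast
      qed
      moreover have "countable (V \<times> V)" using cV by simp
      ultimately have "countable {(u,v). E u v}" by (rule countable_subset)
      then have "countable ((\<lambda>(u,v). edge_img c u v) ` {(u,v). E u v})" by (rule countable_image)
      moreover have "countable ((\<lambda>v. {pos v}) ` V)" using cV by (rule countable_image)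
      ultimately show ?thesis unfolding \<G>_def by (rule countable_Un[rotated])
    qed
    have Gcl: "closed T" "finite (T \<inter> pos ` V)" if TG: "T \<in> \<G>" for T
    proof -
      show "closed T"
      proof (cases "T \<in> (\<lambda>v. {pos v}) ` V")
        case True then show ?thesis by auto
      next
        case False
        then obtain u v where uv: "E u v" "T = edge_img c u v" using TG unfolding \<G>_def by auto
        then have "arc (c u v)" using map by auto
        then show ?thesis using uv unfolding edge_img_def
          by (simp add: arc_imp_path compact_imp_closed compact_path_image)
      qed
      show "finite (T \<inter> pos ` V)"
      proof (cases "T \<in> (\<lambda>v. {pos v}) ` V")
        case True then show ?thesis by auto
      next
        case False
        then obtain u v where uv: "E u v" "T = edge_img c u v" using TG unfolding \<G>_def by auto
        then have "T \<inter> pos ` V = {pos u, pos v}" using map by auto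
        then show ?thesis by simp
      qed
    qed
    define \<G>' where "\<G>' = (\<lambda>T. Q - T) ` \<G>"
    have "Q \<subseteq> closure (\<Inter>\<G>')"
    proof (rule Baire)
      show "closed Q" unfolding Q_def by simp
      show "countable \<G>'" unfolding \<G>'_def using cG by simp
      fix T' assume "T' \<in> \<G>'"
      then obtain T where T: "T \<in> \<G>" "T' = Q - T" unfolding \<G>'_def by auto
      have "openin (top_of_set Q) (Q \<inter> - T)" using Gcl(1)[OF T(1)] by (intro openin_open_Int) auto
      then show "openin (top_of_set Q) T' \<and> Q \<subseteq> closure T'"
      proof (intro conjI)
        show "Q \<subseteq> closure T'"
        proof
          fix x assume x: "x \<in> Q"
          show "x \<in> closure T'"
          proof (rule ccontr)
            assume "x \<notin> closure T'"
            then obtain W where W: "open W" "x \<in> W" "W \<inter> T' = {}"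
              unfolding closure_iff_nhds_not_empty by blast
            have "infinite (W \<inter> Pb)" using key W x by auto
            moreover have "W \<inter> Pb \<subseteq> T \<inter> pos ` V"
            proof
              fix y assume y: "y \<in> W \<inter> Pb"
              then have "y \<in> Q" unfolding Q_def using closure_subset by blast
              then have "y \<in> T" using y W T by auto
              moreover have "y \<in> pos ` V" using y Pb_def Po_def ObV by auto
              ultimately show "y \<in> T \<inter> pos ` V" by simp
            qed
            ultimately show False using Gcl(2)[OF T(1)] finite_subset by blast
          qed
        qed
      qed (use T in \<open>simp add: Diff_eq\<close>)
    qed
    moreover have "\<Inter>\<G>' = {}"
    proof -
      have "\<G> \<noteq> {}" unfolding \<G>_def using b0 by auto
      then obtain T0 where "T0 \<in> \<G>" by blast
      have "False" if y: "y \<in> \<Inter>\<G>'" for y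
      proof -
        have "Q - T0 \<in> \<G>'" unfolding \<G>'_def using \<open>T0 \<in> \<G>\<close> by blast
        then have "y \<in> Q - T0" using y by blast
        then have "y \<in> G" using QG by auto
        then obtain T where "T \<in> \<G>" "y \<in> T"
          unfolding G_def graph_image_def \<G>_def by auto
        then have "Q - T \<in> \<G>'" "y \<in> T" unfolding \<G>'_def by blast+
        then show False using y by blast
      qed
      then show ?thesis by blast
    qed
    ultimately show False using Qne by auto
  qed
qed

end
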